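(* Let $\langle\mathcal{D},\sigma,\varphi\rangle$ be a hybrid temporal achievement causal setting. Then $$\mathcal{D}\models\mathit{CausesDir}^{\mathit{prim}}_{\mathit{temp}}(a,ts,\varphi,\sigma)\land\sigma\le s^*\land\big(\forall s',t'.\;\sigma\le s'\le s^*\land\mathit{start}(s')\le t'\le\mathit{end}(s',s^* )\supset\varphi[t',s']\big)\supset\mathit{CausesDir}^{\mathit{prim}}_{\mathit{temp}}(a,ts,\varphi,s^* )$$ (free variables $a,ts,s^*$ universally quantified).
   Context: Hybrid temporal situation calculus (HTSC): $S_0$ initial situation, $do(a,s)$ successor situation, $do([a_1,\dots,a_n],s)$ the nesting. $s\sqsubset s'$: $s'$ reachable from $s$ by one or more actions; $s\sqsubseteq s'$: $s\sqsubset s'\lor s=s'$. $\mathit{time}(a(\vec x,t))=t$, $\mathit{start}(do(a,s))=\mathit{time}(a)$. $\mathit{Exec}(s)\doteq\forall a,s'.(do(a,s')\sqsubseteq s\supset\mathit{Poss}(a,s')\land\mathit{start}(s')\le\mathit{time}(a))$; $s<s'$ abbreviates $s\sqsubset s'\land\mathit{Exec}(s')$; $s\le s'$ abbreviates $s<s'\lor s=s'$. $\mathit{timeStamp}(S_0)=0$, $\mathit{timeStamp}(do(a,s))=\mathit{timeStamp}(s)+1$. A hybrid basic action theory $\mathcal{D}$ contains initial-state, precondition, successor-state (discrete fluents), state evolution (temporal fluents), unique-names and foundational axioms. A temporal fluent $f$ has state evolution axiom $f(\vec x,t,s)=y\equiv[\bigvee_i(\gamma^f_i(\vec x,s)\land\delta_i(\vec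 x,y,t,s))\lor(y=f(\vec x,\mathit{start}(s),s)\land\neg\bigvee_i\gamma^f_i(\vec x,s))]$ with mutually exclusive contexts $\gamma^f_i$ (formulas over discrete fluents). An effect $\varphi$ is a situation- and time-suppressed formula, uniform in the situation, constraining the value of one primitive temporal fluent $f$; $\varphi[t,s]$ restores time $t$ and situation $s$; $\psi[s]$ restores $s$ in a situation-suppressed $\psi$. $\mathit{CausesDir}(a,ts,\psi,s)\doteq\exists s_a.\,\mathit{timeStamp}(s_a)=ts\land(S_0<do(a,s_a)\le s)\land\neg\psi[s_a]\land\forall s'.(do(a,s_a)\le s'\le s\supset\psi[s'])$. $\mathit{end}(s',s)=\mathit{start}(s')$ if $s'=s$; $=\mathit{time}(a)$ if $do(a,s')\le s$. $\mathit{AchvSitAux}(s_\varphi,\varphi,s)\doteq\varphi[\mathit{end}(s_\varphi,s),s_\varphi]\land\forall s',t.(s_\varphi<s'\le s\land\mathit{start}(s')\le t\le\mathit{end}(s',s)\supset\varphi[t,s'])$; $\mathit{AchvSit}(s_\varphi,\varphi,s)\doteq\mathit{AchvSitAux}(s_\varphi,\varphi,s)\land\neg\exists s''.(s''<s_\varphi\land\mathit{AchvSitAux}(s'',\varphi,s))$. $\mathit{CausesDir}^{\mathit{prim}}_{\mathit{temp}}(a,ts,\varphi,s)\doteq\exists s_\varphi.\,\mathit{AchvSit}(s_\varphi,\varphi,s)\land\exists i.\,\mathit{CausesDir}(a,ts,\gamma^f_i,s_\varphi)$. Hybrid temporal achievement causal setting $\langle\mathcal{D},\sigma,\varphi\rangle$: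 $\sigma=do([\alpha_1,\dots,\alpha_n],S_0)$ ground, $n\ge1$, $\mathcal{D}\models\mathit{Exec}(\sigma)\land\neg\varphi[\mathit{start}(S_0),S_0]\land\neg\varphi[\mathit{time}(\alpha_1),S_0]\land\varphi[\mathit{start}(\sigma),\sigma]$. *)

theory Defs
  imports Main "HOL.Real"
begin

text \<open>Standard model of the foundational axioms: a situation is the finite sequence
of actions performed since S0, most recent action first.
Parameters threaded through: Poss (precondition predicate), tm (the function time),
st0 (the value start(S0)).\<close>

type_synonym 'a sit = "'a list"

definition S0 :: "'a sit" where "S0 = []"

definition do :: "'a \<Rightarrow> 'a sit \<Rightarrow> 'a sit" where "do a s = a # s"

definition sqsub :: "'a sit \<Rightarrow> 'a sit \<Rightarrow> bool" where
  "sqsub s s' \<longleftrightarrow> (\<exists>as. as \<noteq> [] \<and> s' = as @ s)"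

definition sqsubeq :: "'a sit \<Rightarrow> 'a sit \<Rightarrow> bool" where
  "sqsubeq s s' \<longleftrightarrow> sqsub s s' \<or> s = s'"

definition start :: "('a \<Rightarrow> real) \<Rightarrow> real \<Rightarrow> 'a sit \<Rightarrow> real" where
  "start tm st0 s = (case s of [] \<Rightarrow> st0 | a # _ \<Rightarrow> tm a)"

definition timeStamp :: "'a sit \<Rightarrow> nat" where
  "timeStamp s = length s"

definition Exec :: "('a \<Rightarrow> 'a sit \<Rightarrow> bool) \<Rightarrow> ('a \<Rightarrow> real) \<Rightarrow> real \<Rightarrow> 'a sit \<Rightarrow> bool" where
  "Exec Poss tm st0 s \<longleftrightarrow>
     (\<forall>a s'. sqsubeq (do a s') s \<longrightarrow> Poss a s' \<and> start tm st0 s' \<le> tm a)"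

definition slt :: "('a \<Rightarrow> 'a sit \<Rightarrow> bool) \<Rightarrow> ('a \<Rightarrow> real) \<Rightarrow> real \<Rightarrow> 'a sit \<Rightarrow> 'a sit \<Rightarrow> bool" where
  "slt Poss tm st0 s s' \<longleftrightarrow> sqsub s s' \<and> Exec Poss tm st0 s'"

definition sle :: "('a \<Rightarrow> 'a sit \<Rightarrow> bool) \<Rightarrow> ('a \<Rightarrow> real) \<Rightarrow> real \<Rightarrow> 'a sit \<Rightarrow> 'a sit \<Rightarrow> bool" where
  "sle Poss tm st0 s s' \<longleftrightarrow> slt Poss tm st0 s s' \<or> s = s'"

definition send :: "('a \<Rightarrow> 'a sit \<Rightarrow> bool) \<Rightarrow> ('a \<Rightarrow> real) \<Rightarrow> real \<Rightarrow> 'a sit \<Rightarrow> 'a sit \<Rightarrow> real" where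
  "send Poss tm st0 s' s =
     (if s' = s then start tm st0 s' else tm (THE a. sle Poss tm st0 (do a s') s))"

definition CausesDir ::
  "('a \<Rightarrow> 'a sit \<Rightarrow> bool) \<Rightarrow> ('a \<Rightarrow> real) \<Rightarrow> real \<Rightarrow> 'a \<Rightarrow> nat \<Rightarrow> ('a sit \<Rightarrow> bool) \<Rightarrow> 'a sit \<Rightarrow> bool" where
  "CausesDir Poss tm st0 a ts psi s \<longleftrightarrow>
     (\<exists>sa. timeStamp sa = ts \<and> slt Poss tm st0 S0 (do a sa) \<and> sle Poss tm st0 (do a sa) s
        \<and> \<not> psi sa
        \<and> (\<forall>s'. sle Poss tm st0 (do a sa) s' \<and> sle Poss tm st0 s' s \<longrightarrow> psi s'))"

definition AchvSitAux ::
  "('a \<Rightarrow> 'a sit \<Rightarrow> bool) \<Rightarrow> ('a \<Rightarrow> real) \<Rightarrow> real \<Rightarrow> 'a sit \<Rightarrow> (real \<Rightarrow> 'a sit \<Rightarrow> bool) \<Rightarrow> 'a sit \<Rightarrow> bool" where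
  "AchvSitAux Poss tm st0 sphi phi s \<longleftrightarrow>
     phi (send Poss tm st0 sphi s) sphi
     \<and> (\<forall>s' t. slt Poss tm st0 sphi s' \<and> sle Poss tm st0 s' s
          \<and> start tm st0 s' \<le> t \<and> t \<le> send Poss tm st0 s' s \<longrightarrow> phi t s')"

definition AchvSit ::
  "('a \<Rightarrow> 'a sit \<Rightarrow> bool) \<Rightarrow> ('a \<Rightarrow> real) \<Rightarrow> real \<Rightarrow> 'a sit \<Rightarrow> (real \<Rightarrow> 'a sit \<Rightarrow> bool) \<Rightarrow> 'a sit \<Rightarrow> bool" where
  "AchvSit Poss tm st0 sphi phi s \<longleftrightarrow>
     AchvSitAux Poss tm st0 sphi phi s
     \<and> \<not> (\<exists>s''. slt Poss tm st0 s'' sphi \<and> AchvSitAux Poss tm st0 s'' phi s)"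

text \<open>CausesDir^prim_temp(a,ts,phi,s); gam i is the i-th context gamma^f_i (instantiated
at the arguments of the fluent constrained by phi), as a situation predicate.\<close>
definition CausesDirPrimTemp ::
  "('a \<Rightarrow> 'a sit \<Rightarrow> bool) \<Rightarrow> ('a \<Rightarrow> real) \<Rightarrow> real \<Rightarrow> ('i \<Rightarrow> 'a sit \<Rightarrow> bool)
   \<Rightarrow> 'a \<Rightarrow> nat \<Rightarrow> (real \<Rightarrow> 'a sit \<Rightarrow> bool) \<Rightarrow> 'a sit \<Rightarrow> bool" where
  "CausesDirPrimTemp Poss tm st0 gam a ts phi s \<longleftrightarrow>
     (\<exists>sphi. AchvSit Poss tm st0 sphi phi s \<and> (\<exists>i. CausesDir Poss tm st0 a ts (gam i) sphi))"

end

theory Submission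
  imports Defs "HOL-Library.Sublist"
begin

lemma sqsubeq_iff: "sqsubeq s s' \<longleftrightarrow> suffix s s'"
  by (auto simp: sqsubeq_def sqsub_def suffix_def)

lemma sqsub_iff: "sqsub s s' \<longleftrightarrow> suffix s s' \<and> s \<noteq> s'"
  by (auto simp: sqsub_def suffix_def)

lemma Exec_suffix: "Exec P tm st0 y \<Longrightarrow> suffix x y \<Longrightarrow> Exec P tm st0 x"
  unfolding Exec_def sqsubeq_iff by (meson suffix_order.trans)

lemma sle_iff: "sle P tm st0 x y \<longleftrightarrow> x = y \<or> (suffix x y \<and> x \<noteq> y \<and> Exec P tm st0 y)"
  by (auto simp: sle_def slt_def sqsub_iff)

lemma suffix_cons_eq:
  assumes "suffix (a # x) y" "suffix (b # x) y" shows "a = b"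
proof -
  obtain p q where "y = p @ a # x" "y = q @ b # x" using assms by (auto simp: suffix_def)
  then have "p @ [a] @ x = q @ [b] @ x" by simp
  then have "p @ [a] = q @ [b]" by simp
  then show ?thesis by simp
qed

lemma send_last:
  assumes "y = bs @ x" "bs \<noteq> []" "Exec P tm st0 y"
  shows "send P tm st0 x y = tm (last bs)"
proof -
  have ne: "x \<noteq> y" using assms by simp
  have y2: "y = butlast bs @ (last bs # x)" using assms by simp
  have s1: "sle P tm st0 (do (last bs) x) y"
    unfolding sle_iff do_def using assms y2 by (metis suffix_def)
  have "(THE a. sle P tm st0 (do a x) y) = last bs"
  proof (rule the_equality)
    show "sle P tm st0 (do (last bs) x) y" by (rule s1)
  next
    fix a assume "sle P tm st0 (do a x) y"
    then have "suffix (a # x) y" unfolding sle_iff do_def by auto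
    moreover have "suffix (last bs # x) y" using y2 by (metis suffix_def)
    ultimately show "a = last bs" by (rule suffix_cons_eq)
  qed
  then show ?thesis using ne by (simp add: send_def)
qed

lemma send_none:
  assumes "\<not> suffix x y"
  shows "send P tm st0 x y = tm (THE a. False)"
proof -
  have ne: "x \<noteq> y" using assms by auto
  have "\<And>a. \<not> sle P tm st0 (do a x) y"
  proof
    fix a assume "sle P tm st0 (do a x) y"
    then have "suffix (a # x) y" unfolding sle_iff do_def by auto
    then have "suffix x y" by (meson suffix_ConsD)
    then show False using assms by simp
  qed
  then show ?thesis using ne by (simp add: send_def)
qed

lemma Exec_step:
  assumes "Exec P tm st0 y" "y = bs @ x" "bs \<noteq> []"
  shows "start tm st0 x \<le> tm (last bs)"
proof -
  have "y = butlast bs @ (last bs # x)" using assms by simp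
  then have "sqsubeq (do (last bs) x) y" unfolding sqsubeq_iff do_def by (metis suffix_def)
  then show ?thesis using assms(1) unfolding Exec_def by blast
qed

lemma sle_suffix: "sle P tm st0 x y \<Longrightarrow> suffix x y"
  by (auto simp: sle_iff)

lemma slt_suffix: "slt P tm st0 x y \<Longrightarrow> suffix x y \<and> x \<noteq> y \<and> Exec P tm st0 y"
  by (auto simp: slt_def sqsub_iff)

lemma send_eq:
  assumes "suffix x sg" "x \<noteq> sg" "suffix sg ss" "Exec P tm st0 ss"
  shows "send P tm st0 x ss = send P tm st0 x sg"
proof -
  obtain bs where b: "sg = bs @ x" "bs \<noteq> []" using assms by (auto simp: suffix_def)
  obtain cs where c: "ss = cs @ sg" using assms by (auto simp: suffix_def)
  have e: "Exec P tm st0 sg" using Exec_suffix assms by blast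
  have "send P tm st0 x ss = tm (last (cs @ bs))" using b c assms by (intro send_last) auto
  also have "\<dots> = tm (last bs)" using b by simp
  also have "\<dots> = send P tm st0 x sg" using b e by (simp add: send_last)
  finally show ?thesis .
qed

lemma send_ge:
  assumes "suffix sg ss" "sg \<noteq> ss" "Exec P tm st0 ss"
  shows "start tm st0 sg \<le> send P tm st0 sg ss"
proof -
  obtain cs where c: "ss = cs @ sg" "cs \<noteq> []" using assms by (auto simp: suffix_def)
  then show ?thesis using assms send_last Exec_step by metis
qed

lemma send_self: "send P tm st0 x x = start tm st0 x"
  by (simp add: send_def)

lemma aux_up:
  assumes sx: "suffix x sg" and aux: "AchvSitAux P tm st0 x phi sg"
    and ss: "suffix sg ss" "sg \<noteq> ss" and ex: "Exec P tm st0 ss" and exg: "Exec P tm st0 sg"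
    and H3: "\<forall>s' t'. sle P tm st0 sg s' \<and> sle P tm st0 s' ss
                  \<and> start tm st0 s' \<le> t' \<and> t' \<le> send P tm st0 s' ss \<longrightarrow> phi t' s'"
  shows "AchvSitAux P tm st0 x phi ss"
  unfolding AchvSitAux_def
proof (intro conjI allI impI)
  show "phi (send P tm st0 x ss) x"
  proof (cases "x = sg")
    case True
    have "sle P tm st0 sg ss" using ss ex by (simp add: sle_iff)
    moreover have "sle P tm st0 sg sg" by (simp add: sle_def)
    ultimately show ?thesis using True H3 send_ge[OF ss ex] by blast
  next
    case False
    then show ?thesis using aux send_eq[OF sx False ss(1) ex] by (simp add: AchvSitAux_def)
  qed
next
  fix s' t
  assume A: "slt P tm st0 x s' \<and> sle P tm st0 s' ss \<and> start tm st0 s' \<le> t \<and> t \<le> send P tm st0 s' ss"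
  have s1: "suffix s' ss" using A sle_suffix by blast
  from suffix_same_cases[OF s1 ss(1)] show "phi t s'"
  proof
    assume "suffix s' sg"
    show ?thesis
    proof (cases "s' = sg")
      case True then show ?thesis using A H3 by (auto simp: sle_iff)
    next
      case False
      have "sle P tm st0 s' sg" using False \<open>suffix s' sg\<close> exg by (simp add: sle_iff)
      moreover have "send P tm st0 s' ss = send P tm st0 s' sg"
        using send_eq[OF \<open>suffix s' sg\<close> False ss(1) ex] .
      ultimately show ?thesis using A aux unfolding AchvSitAux_def by auto
    qed
  next
    assume "suffix sg s'"
    then have "sle P tm st0 sg s'" using A Exec_suffix[OF ex s1] by (auto simp: sle_iff)
    then show ?thesis using A H3 by auto
  qed
qed

lemma aux_down:
  assumes sx: "suffix x sg" "x \<noteq> sg" and aux: "AchvSitAux P tm st0 x phi ss"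
    and ss: "suffix sg ss" and ex: "Exec P tm st0 ss" and exg: "Exec P tm st0 sg"
    and ach: "phi (start tm st0 sg) sg"
  shows "AchvSitAux P tm st0 x phi sg"
  unfolding AchvSitAux_def
proof (intro conjI allI impI)
  show "phi (send P tm st0 x sg) x"
    using aux send_eq[OF sx ss ex] by (simp add: AchvSitAux_def)
next
  fix s' t
  assume A: "slt P tm st0 x s' \<and> sle P tm st0 s' sg \<and> start tm st0 s' \<le> t \<and> t \<le> send P tm st0 s' sg"
  have s1: "suffix s' sg" using A sle_suffix by blast
  show "phi t s'"
  proof (cases "s' = sg")
    case True
    then have "t = start tm st0 sg" using A by (simp add: send_self)
    then show ?thesis using True ach by simp
  next
    case False
    have "sle P tm st0 s' ss" using False s1 ss ex
      by (auto simp: sle_iff intro: suffix_order.trans)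
    moreover have "send P tm st0 s' sg = send P tm st0 s' ss"
      using send_eq[OF s1 False ss ex] by simp
    ultimately show ?thesis using A aux unfolding AchvSitAux_def by auto
  qed
qed

lemma aux_none:
  assumes "\<not> suffix x ss" "suffix sg ss"
  shows "AchvSitAux P tm st0 x phi ss \<longleftrightarrow> AchvSitAux P tm st0 x phi sg"
proof -
  have n2: "\<not> suffix x sg" using assms suffix_order.trans by blast
  have v: "\<And>y s'. \<not> suffix x y \<Longrightarrow> \<not> (slt P tm st0 x s' \<and> sle P tm st0 s' y)"
    using slt_suffix sle_suffix suffix_order.trans by blast
  show ?thesis unfolding AchvSitAux_def
    using send_none[OF assms(1)] send_none[OF n2] v[OF assms(1)] v[OF n2] by metis
qed

lemma achv_up:
  assumes exg: "Exec P tm st0 sg" and ach: "phi (start tm st0 sg) sg"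
    and A: "AchvSit P tm st0 sphi phi sg" and exf: "Exec P tm st0 sphi"
    and le: "sle P tm st0 sg ss"
    and H3: "\<forall>s' t'. sle P tm st0 sg s' \<and> sle P tm st0 s' ss
                  \<and> start tm st0 s' \<le> t' \<and> t' \<le> send P tm st0 s' ss \<longrightarrow> phi t' s'"
  shows "AchvSit P tm st0 sphi phi ss"
proof (cases "sg = ss")
  case True then show ?thesis using A by simp
next
  case False
  have ss: "suffix sg ss" and ex: "Exec P tm st0 ss" using le False by (auto simp: sle_iff)
  have auxf: "AchvSitAux P tm st0 sphi phi sg" and minf: "\<not> (\<exists>s''. slt P tm st0 s'' sphi \<and> AchvSitAux P tm st0 s'' phi sg)"
    using A by (auto simp: AchvSit_def)
  have nstrict: "\<not> (suffix sg sphi \<and> sg \<noteq> sphi)"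
  proof
    assume h: "suffix sg sphi \<and> sg \<noteq> sphi"
    have "slt P tm st0 sg sphi" using h exf by (simp add: slt_def sqsub_iff)
    moreover have "AchvSitAux P tm st0 sg phi sg"
      unfolding AchvSitAux_def send_self using ach slt_suffix sle_suffix suffix_order.antisym by blast
    ultimately show False using minf by blast
  qed
  have case_split: "suffix sphi sg \<or> \<not> suffix sphi ss"
  proof (rule ccontr)
    assume "\<not> (suffix sphi sg \<or> \<not> suffix sphi ss)"
    then have "\<not> suffix sphi sg" "suffix sphi ss" by auto
    with suffix_same_cases[of sphi ss sg] ss nstrict show False by auto
  qed
  have aux_ss: "AchvSitAux P tm st0 sphi phi ss"
    using case_split
  proof
    assume "suffix sphi sg"
    then show ?thesis using aux_up[OF _ auxf ss False ex exg H3] by blast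
  next
    assume "\<not> suffix sphi ss"
    then show ?thesis using aux_none[OF _ ss] auxf by blast
  qed
  have "\<not> (\<exists>s''. slt P tm st0 s'' sphi \<and> AchvSitAux P tm st0 s'' phi ss)"
  proof
    assume "\<exists>s''. slt P tm st0 s'' sphi \<and> AchvSitAux P tm st0 s'' phi ss"
    then obtain x where x: "slt P tm st0 x sphi" "AchvSitAux P tm st0 x phi ss" by blast
    have xs: "suffix x sphi" "x \<noteq> sphi" using slt_suffix[OF x(1)] by auto
    have "AchvSitAux P tm st0 x phi sg"
    proof (cases "suffix x ss")
      case False
      then show ?thesis using aux_none[OF False ss] x(2) by blast
    next
      case True
      have "suffix x sg \<and> x \<noteq> sg"
      proof (cases "suffix sphi sg")
        case True
        then show ?thesis using xs suffix_order.trans suffix_order.antisym by metis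
      next
        case nf: False
        from suffix_same_cases[OF True ss] show ?thesis
        proof
          assume "suffix x sg"
          moreover have "x \<noteq> sg" using nf xs nstrict by auto
          ultimately show ?thesis by simp
        next
          assume "suffix sg x"
          then have "suffix sg sphi" using xs suffix_order.trans by blast
          moreover have "sg \<noteq> sphi" using nf by auto
          ultimately show ?thesis using nstrict by blast
        qed
      qed
      then show ?thesis using aux_down[OF _ _ x(2) ss ex exg ach] by blast
    qed
    then show False using minf x(1) by blast
  qed
  then show ?thesis using aux_ss by (simp add: AchvSit_def)
qed

theorem theorem5p6:
  fixes Poss :: "'a \<Rightarrow> 'a list \<Rightarrow> bool"
    and tm :: "'a \<Rightarrow> real"
    and st0 :: real
    and f :: "'x \<Rightarrow> real \<Rightarrow> 'a list \<Rightarrow> 'v"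
    and gamma :: "'i::finite \<Rightarrow> 'x \<Rightarrow> 'a list \<Rightarrow> bool"
    and delta :: "'i \<Rightarrow> 'x \<Rightarrow> 'v \<Rightarrow> real \<Rightarrow> 'a list \<Rightarrow> bool"
    and c :: 'x
    and Phi :: "'v \<Rightarrow> bool"
    and sigma :: "'a list"
    and a :: 'a and ts :: nat and sstar :: "'a list"
  assumes excl: "\<forall>i j x s. gamma i x s \<and> gamma j x s \<longrightarrow> i = j"
    and sea: "\<forall>x y t s. (f x t s = y) \<longleftrightarrow>
               ((\<exists>i. gamma i x s \<and> delta i x y t s)
                \<or> (y = f x (start tm st0 s) s \<and> \<not> (\<exists>i. gamma i x s)))"
    and ground: "sigma \<noteq> []"
    and exec: "Exec Poss tm st0 sigma"
    and notS0: "\<not> Phi (f c (start tm st0 S0) S0)"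
    and notS0a1: "\<not> Phi (f c (tm (last sigma)) S0)"
    and achieved: "Phi (f c (start tm st0 sigma) sigma)"
  shows "CausesDirPrimTemp Poss tm st0 (\<lambda>i s. gamma i c s) a ts (\<lambda>t s. Phi (f c t s)) sigma
         \<and> sle Poss tm st0 sigma sstar
         \<and> (\<forall>s' t'. sle Poss tm st0 sigma s' \<and> sle Poss tm st0 s' sstar
                  \<and> start tm st0 s' \<le> t' \<and> t' \<le> send Poss tm st0 s' sstar
                  \<longrightarrow> Phi (f c t' s'))
         \<longrightarrow> CausesDirPrimTemp Poss tm st0 (\<lambda>i s. gamma i c s) a ts (\<lambda>t s. Phi (f c t s)) sstar"
proof (intro impI)
  assume H: "CausesDirPrimTemp Poss tm st0 (\<lambda>i s. gamma i c s) a ts (\<lambda>t s. Phi (f c t s)) sigma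
         \<and> sle Poss tm st0 sigma sstar
         \<and> (\<forall>s' t'. sle Poss tm st0 sigma s' \<and> sle Poss tm st0 s' sstar
                  \<and> start tm st0 s' \<le> t' \<and> t' \<le> send Poss tm st0 s' sstar
                  \<longrightarrow> Phi (f c t' s'))"
  then obtain sphi i where A: "AchvSit Poss tm st0 sphi (\<lambda>t s. Phi (f c t s)) sigma"
    and C: "CausesDir Poss tm st0 a ts (\<lambda>s. gamma i c s) sphi"
    by (auto simp: CausesDirPrimTemp_def)
  obtain sa where "slt Poss tm st0 S0 (do a sa)" "sle Poss tm st0 (do a sa) sphi"
    using C by (auto simp: CausesDir_def)
  then have exf: "Exec Poss tm st0 sphi" by (auto simp: slt_def sle_iff)
  have "AchvSit Poss tm st0 sphi (\<lambda>t s. Phi (f c t s)) sstar"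
    using achv_up[of Poss tm st0 sigma "\<lambda>t s. Phi (f c t s)", OF exec _ A exf] H achieved by blast
  then show "CausesDirPrimTemp Poss tm st0 (\<lambda>i s. gamma i c s) a ts (\<lambda>t s. Phi (f c t s)) sstar"
    using C by (auto simp: CausesDirPrimTemp_def)
qed

end
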